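(* Let $\sigma\in S_t$ and $p\in S_k$, and let $m=\min(t-1,k)$. If $\mathrm{red}(p_1\cdots p_m)\neq\mathrm{red}(\sigma_1\cdots\sigma_m)$, then the set $\{1\}$ is reversibly deletable for $p$ with respect to $\{(\sigma,[t-2])\}$ (the vincular pattern $\sigma_1\sigma_2\cdots\sigma_{t-1}\text{-}\sigma_t$).
   Context: $\mathrm{red}(w)$ replaces the $i$-th smallest letter of a word of distinct integers by $i$. A vincular pattern of length $\ell$ is $(\sigma,X)$ with $\sigma\in S_\ell$, $X\subseteq[\ell-1]$; $\pi\in S_n$ contains it if there are $i_1<\dots<i_\ell$ with $\mathrm{red}(\pi_{i_1}\cdots\pi_{i_\ell})=\sigma$ and $i_{x+1}=i_x+1$ for all $x\in X$. For $p\in S_k$ and $w\in[n]^k$ with distinct letters and $\mathrm{red}(w)=p$, $S_n^B(p;w)$ is the set of $B$-avoiding $\pi\in S_n$ with $\pi_i=w_i$ for $i\le k$. $d_R(\pi)$ deletes the entries in positions in $R$ and reduces; for words $d_R(w)$ deletes $w_r$ ($r\in R$) and subtracts from each remaining $w_i$ the number of $r\in R$ with $w_r<w_i$. $R\subseteq[k]$ is reversibly deletable for $p$ w.r.t. $B$ if for every $n$ and every such $w$ with $S_n^B(p;w)\ne\emptyset$, $d_R$ restricts to a bijection $S_n^B(p;w)\to S_{n-|R|}^B(d_R(p);d_R(w))$. *)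

theory Defs
  imports Main
begin

text \<open>Words and permutations are lists of positive naturals; positions in the
paper are 1-based, list indices are 0-based.\<close>

definition perms :: "nat \<Rightarrow> nat list set" where
  "perms n = {\<pi>. length \<pi> = n \<and> distinct \<pi> \<and> set \<pi> = {1..n}}"

text \<open>red(w): replace the i-th smallest letter by i (for words of distinct letters).\<close>
definition red :: "nat list \<Rightarrow> nat list" where
  "red w = map (\<lambda>x. card {y \<in> set w. y \<le> x}) w"

text \<open>A vincular pattern (sigma, X): sigma a permutation, X a subset of [length sigma - 1].\<close>
type_synonym vpattern = "nat list \<times> nat set"

definition contains :: "nat list \<Rightarrow> vpattern \<Rightarrow> bool" where
  "contains \<pi> q \<longleftrightarrow> (\<exists>is. length is = length (fst q) \<and> sorted_wrt (<) is
      \<and> (\<forall>i\<in>set is. i < length \<pi>)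
      \<and> red (map (\<lambda>i. \<pi> ! i) is) = fst q
      \<and> (\<forall>x\<in>snd q. is ! x = is ! (x - 1) + 1))"

definition avoids :: "vpattern set \<Rightarrow> nat list \<Rightarrow> bool" where
  "avoids B \<pi> \<longleftrightarrow> (\<forall>q\<in>B. \<not> contains \<pi> q)"

definition Sset :: "nat \<Rightarrow> vpattern set \<Rightarrow> nat list \<Rightarrow> nat list \<Rightarrow> nat list set" where
  "Sset n B p w = {\<pi> \<in> perms n. avoids B \<pi> \<and> (\<forall>i. 1 \<le> i \<and> i \<le> length p \<longrightarrow> \<pi> ! (i - 1) = w ! (i - 1))}"

definition delpos :: "nat set \<Rightarrow> nat list \<Rightarrow> nat list" where
  "delpos R w = map (\<lambda>i. w ! i) (filter (\<lambda>i. Suc i \<notin> R) [0..<length w])"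

definition dperm :: "nat set \<Rightarrow> nat list \<Rightarrow> nat list" where
  "dperm R \<pi> = red (delpos R \<pi>)"

definition dword :: "nat set \<Rightarrow> nat list \<Rightarrow> nat list" where
  "dword R w = map (\<lambda>i. w ! i - card {r \<in> R. 1 \<le> r \<and> r \<le> length w \<and> w ! (r - 1) < w ! i})
                   (filter (\<lambda>i. Suc i \<notin> R) [0..<length w])"

definition rev_deletable :: "nat set \<Rightarrow> nat list \<Rightarrow> vpattern set \<Rightarrow> bool" where
  "rev_deletable R p B \<longleftrightarrow> R \<subseteq> {1..length p} \<and>
     (\<forall>n w. length w = length p \<and> distinct w \<and> set w \<subseteq> {1..n} \<and> red w = p
        \<and> Sset n B p w \<noteq> {} \<longrightarrow>
        bij_betw (dperm R) (Sset n B p w)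
                 (Sset (n - card R) B (dperm R p) (dword R w)))"

end

theory Submission
  imports Defs
begin


definition rk :: "nat list \<Rightarrow> nat \<Rightarrow> nat" where
  "rk u x = card {y \<in> set u. y \<le> x}"

lemma red_rk: "red u = map (rk u) u" by (simp add: red_def rk_def)

lemma rk_mono: "strict_mono_on (set u) (rk u)"
proof (rule strict_mono_onI)
  fix x y assume "x \<in> set u" "y \<in> set u" "x < y"
  then have "{z \<in> set u. z \<le> x} \<subset> {z \<in> set u. z \<le> y}"
    by (auto simp: psubset_eq) (metis (mono_tags, lifting) leD mem_Collect_eq order_refl)
  then show "rk u x < rk u y" unfolding rk_def by (intro psubset_card_mono) auto
qed

lemma red_map_mono:
  fixes f :: "nat \<Rightarrow> nat"
  assumes "strict_mono_on S f" "set u \<subseteq> S"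
  shows "red (map f u) = red u"
proof -
  have inj: "inj_on f (set u)"
    using strict_mono_on_imp_inj_on[OF assms(1)] assms(2) inj_on_subset by blast
  have c: "card {y \<in> set (map f u). y \<le> f x} = card {y \<in> set u. y \<le> x}" if "x \<in> set u" for x
  proof -
    have "{y \<in> set (map f u). y \<le> f x} = f ` {y \<in> set u. y \<le> x}"
      using strict_mono_on_less_eq[OF assms(1)] that assms(2) by auto
    then show ?thesis by (simp add: card_image inj_on_subset[OF inj])
  qed
  show ?thesis unfolding red_def map_map o_def
    by (rule map_cong[OF refl]) (use c in auto)
qed

lemma red_take: "red (take m (red v)) = red (take m v)"
  unfolding red_rk[of v] take_map
  by (rule red_map_mono[OF rk_mono]) (meson set_take_subset)

lemma red_perm: "\<rho> \<in> perms n \<Longrightarrow> red \<rho> = \<rho>"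
  unfolding red_def perms_def
proof (rule map_idI, clarsimp)
  fix x assume "Suc 0 \<le> x" "x \<le> length \<rho>"
  then have "{y. Suc 0 \<le> y \<and> y \<le> length \<rho> \<and> y \<le> x} = {1..x}" by auto
  then show "card {y. Suc 0 \<le> y \<and> y \<le> length \<rho> \<and> y \<le> x} = x" by simp
qed

lemma contains_map:
  fixes g :: "nat \<Rightarrow> nat"
  assumes "strict_mono_on (set \<rho>) g" "contains (map g \<rho>) q"
  shows "contains \<rho> q"
proof -
  obtain "is" where h: "length is = length (fst q)" "sorted_wrt (<) is"
      "\<forall>i\<in>set is. i < length (map g \<rho>)" "red (map (\<lambda>i. map g \<rho> ! i) is) = fst q"
      "\<forall>x\<in>snd q. is ! x = is ! (x - 1) + 1"
    using assms(2) unfolding contains_def by blast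
  have "map (\<lambda>i. map g \<rho> ! i) is = map g (map (\<lambda>i. \<rho> ! i) is)" using h(3) by simp
  moreover have "red (map g (map (\<lambda>i. \<rho> ! i) is)) = red (map (\<lambda>i. \<rho> ! i) is)"
    by (rule red_map_mono[OF assms(1)]) (use h(3) in auto)
  ultimately have "red (map (\<lambda>i. \<rho> ! i) is) = fst q" using h(4) by metis
  then show ?thesis unfolding contains_def using h by (intro exI[of _ "is"]) simp
qed

lemma contains_red: "contains (red u) q \<Longrightarrow> contains u q"
  unfolding red_rk[of u] by (rule contains_map[OF rk_mono])



definition occ :: "nat list \<Rightarrow> vpattern \<Rightarrow> nat list \<Rightarrow> bool" where
  "occ \<pi> q is \<longleftrightarrow> length is = length (fst q) \<and> sorted_wrt (<) is
      \<and> (\<forall>i\<in>set is. i < length \<pi>)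
      \<and> red (map (\<lambda>i. \<pi> ! i) is) = fst q
      \<and> (\<forall>x\<in>snd q. is ! x = is ! (x - 1) + 1)"

lemma contains_occ: "contains \<pi> q \<longleftrightarrow> (\<exists>is. occ \<pi> q is)"
  unfolding contains_def occ_def by blast

lemma contains_Cons:
  assumes X: "\<forall>x\<in>snd q. 0 < x \<and> x < length (fst q)" and c: "contains \<rho> q"
  shows "contains (a # \<rho>) q"
proof -
  obtain "is" where h: "occ \<rho> q is" using c contains_occ by blast
  have "occ (a # \<rho>) q (map Suc is)"
    using h X unfolding occ_def
    by (auto simp: sorted_wrt_map o_def)
  then show ?thesis using contains_occ by blast
qed

lemma contains_unCons:
  assumes X: "\<forall>x\<in>snd q. 0 < x \<and> x < length (fst q)" and L: "0 < length (fst q)"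
    and h: "occ (a # \<rho>) q is" and nz: "is ! 0 \<noteq> 0"
  shows "contains \<rho> q"
proof -
  have len: "length is = length (fst q)" and so: "sorted_wrt (<) is" using h unfolding occ_def by auto
  have pos: "i \<noteq> 0" if "i \<in> set is" for i
  proof -
    obtain j where j: "j < length is" "i = is ! j" using \<open>i \<in> set is\<close> by (metis in_set_conv_nth)
    show ?thesis
    proof (cases j)
      case 0 then show ?thesis using j nz by simp
    next
      case (Suc j') then have "is ! 0 < is ! j" using so j sorted_wrt_nth_less by fastforce
      then show ?thesis using j by simp
    qed
  qed
  have "occ \<rho> q (map (\<lambda>i. i - 1) is)"
    unfolding occ_def
  proof (intro conjI)
    show "length (map (\<lambda>i. i - 1) is) = length (fst q)" using len by simp
    show "sorted_wrt (<) (map (\<lambda>i. i - 1) is)"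
      unfolding sorted_wrt_map
    proof (rule sorted_wrt_mono_rel[OF _ so])
      fix x y assume "x \<in> set is" "y \<in> set is" "x < y"
      then show "x - 1 < y - 1" using pos[of x] by simp
    qed
    show "\<forall>i\<in>set (map (\<lambda>i. i - 1) is). i < length \<rho>" using h pos unfolding occ_def by fastforce
    have "map (\<lambda>i. \<rho> ! i) (map (\<lambda>i. i - 1) is) = map (\<lambda>i. (a # \<rho>) ! i) is"
      using pos by (auto simp: nth_Cons')
    moreover have "red (map (\<lambda>i. (a # \<rho>) ! i) is) = fst q" using h unfolding occ_def by simp
    ultimately show "red (map (\<lambda>i. \<rho> ! i) (map (\<lambda>i. i - 1) is)) = fst q" by metis
    show "\<forall>x\<in>snd q. map (\<lambda>i. i - 1) is ! x = map (\<lambda>i. i - 1) is ! (x - 1) + 1"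
    proof
      fix x assume x: "x \<in> snd q"
      then have "x < length is" "x - 1 < length is" using X len by auto
      moreover have "is ! x = is ! (x - 1) + 1" using h x unfolding occ_def by auto
      moreover have "is ! (x - 1) \<noteq> 0" using pos \<open>x - 1 < length is\<close> by auto
      ultimately show "map (\<lambda>i. i - 1) is ! x = map (\<lambda>i. i - 1) is ! (x - 1) + 1" by simp
    qed
  qed
  then show ?thesis using contains_occ by blast
qed



definition dec :: "nat \<Rightarrow> nat \<Rightarrow> nat" where "dec a x = (if x < a then x else x - 1)"
definition inc :: "nat \<Rightarrow> nat \<Rightarrow> nat" where "inc a x = (if x < a then x else x + 1)"

lemma inc_mono: "strict_mono_on S (inc a)"
  by (rule strict_mono_onI) (auto simp: inc_def)

lemma dec_mono: "strict_mono_on (- {a}) (dec a)"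
  by (rule strict_mono_onI) (auto simp: dec_def)

lemma filter1: "filter (\<lambda>i. Suc i \<notin> {1}) [0..<L] = [1..<L]"
  by (induction L) auto

lemma delpos1: "delpos {1} xs = tl xs"
  unfolding delpos_def filter1
  by (rule nth_equalityI) (auto simp: nth_tl)

lemma dword1:
  assumes "length w = k" "1 \<le> k"
  shows "length (dword {1} w) = k - 1"
    "\<And>j. j < k - 1 \<Longrightarrow> dword {1} w ! j = w ! Suc j - (if w ! 0 < w ! Suc j then 1 else 0)"
proof -
  show "length (dword {1} w) = k - 1" unfolding dword_def filter1 using assms by simp
  fix j assume "j < k - 1"
  moreover have "{r \<in> {1}. 1 \<le> r \<and> r \<le> length w \<and> w ! (r - 1) < w ! Suc j}
     = (if w ! 0 < w ! Suc j then {1} else {})" using assms by auto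
  ultimately show "dword {1} w ! j = w ! Suc j - (if w ! 0 < w ! Suc j then 1 else 0)"
    unfolding dword_def filter1 using assms by simp
qed

lemma red_remove:
  assumes "set \<rho> = {1..n} - {a}" "a \<in> {1..n}"
  shows "red \<rho> = map (dec a) \<rho>"
  unfolding red_def
proof (rule map_cong[OF refl])
  fix x assume x: "x \<in> set \<rho>"
  then have xa: "x \<noteq> a" "1 \<le> x" "x \<le> n" using assms(1) by auto
  have "{y \<in> set \<rho>. y \<le> x} = {1..x} - {a}" unfolding assms(1) using xa by auto
  moreover have "card ({1..x} - {a}) = dec a x"
  proof (cases "x < a")
    case True then show ?thesis by (simp add: dec_def)
  next
    case False
    then have "a \<in> {1..x}" using assms(2) by simp
    then show ?thesis using False by (simp add: dec_def)
  qed
  ultimately show "card {y \<in> set \<rho>. y \<le> x} = dec a x" by simp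
qed

lemma dec_perm:
  assumes "distinct \<rho>" "set \<rho> = {1..n} - {a}" "length \<rho> = n - 1" "a \<in> {1..n}"
  shows "map (dec a) \<rho> \<in> perms (n - 1)"
proof -
  have "inj_on (dec a) (set \<rho>)"
    using strict_mono_on_imp_inj_on[OF dec_mono] assms(2) inj_on_subset by blast
  moreover have "dec a ` ({1..n} - {a}) = {1..n-1}"
  proof
    show "dec a ` ({1..n} - {a}) \<subseteq> {1..n - 1}" using assms(4) by (auto simp: dec_def)
    show "{1..n - 1} \<subseteq> dec a ` ({1..n} - {a})"
    proof
      fix y assume y: "y \<in> {1..n - 1}"
      show "y \<in> dec a ` ({1..n} - {a})"
      proof (cases "y < a")
        case True then show ?thesis using y by (intro image_eqI[of _ _ y]) (auto simp: dec_def)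
      next
        case False then show ?thesis using y by (intro image_eqI[of _ _ "y + 1"]) (auto simp: dec_def)
      qed
    qed
  qed
  ultimately show ?thesis using assms unfolding perms_def by (simp add: distinct_map)
qed

lemma inc_perm:
  assumes "\<rho> \<in> perms (n - 1)" "a \<in> {1..n}"
  shows "a # map (inc a) \<rho> \<in> perms n"
proof -
  have r: "length \<rho> = n - 1" "distinct \<rho>" "set \<rho> = {1..n-1}" using assms(1) unfolding perms_def by auto
  have "inj_on (inc a) (set \<rho>)" using strict_mono_on_imp_inj_on[OF inc_mono] by blast
  moreover have "a \<notin> inc a ` set \<rho>" by (auto simp: inc_def)
  moreover have "insert a (inc a ` {1..n-1}) = {1..n}"
  proof
    show "insert a (inc a ` {1..n - 1}) \<subseteq> {1..n}" using assms(2) by (auto simp: inc_def)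
    show "{1..n} \<subseteq> insert a (inc a ` {1..n - 1})"
    proof
      fix y assume y: "y \<in> {1..n}"
      show "y \<in> insert a (inc a ` {1..n - 1})"
      proof (cases "y < a")
        case True then show ?thesis using y assms(2) by (intro insertI2 image_eqI[of _ _ y]) (auto simp: inc_def)
      next
        case False
        show ?thesis
        proof (cases "y = a")
          case False then show ?thesis using y \<open>\<not> y < a\<close> assms(2) by (intro insertI2 image_eqI[of _ _ "y - 1"]) (auto simp: inc_def)
        qed simp
      qed
    qed
  qed
  ultimately show ?thesis using r assms(2) unfolding perms_def by (auto simp: distinct_map)
qed



lemma first_pos:
  assumes "length \<sigma> = t" "m \<le> t - 1" "m \<le> k" "red (take m p) \<noteq> red (take m \<sigma>)"
    "red w = p" "length w = k" "\<forall>j<k. \<pi> ! j = w ! j" "occ \<pi> (\<sigma>, {1..t-2}) is"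
  shows "is ! 0 \<noteq> 0"
proof
  assume z: "is ! 0 = 0"
  have h: "length is = t" "red (map (\<lambda>i. \<pi> ! i) is) = \<sigma>"
    "\<forall>x\<in>{1..t-2}. is ! x = is ! (x - 1) + 1" using assms(1,8) unfolding occ_def by auto
  have idx: "j \<le> t - 2 \<Longrightarrow> is ! j = j" for j
  proof (induction j)
    case 0 then show ?case using z by simp
  next
    case (Suc j) then show ?case using h(3) by force
  qed
  define v where "v = map (\<lambda>i. \<pi> ! i) is"
  have "take m v = take m w"
  proof (rule nth_equalityI)
    show "length (take m v) = length (take m w)" using assms h(1) unfolding v_def by simp
    fix j assume "j < length (take m v)"
    then have j: "j < m" "j < t" using h(1) by (auto simp: v_def)
    then have "j \<le> t - 2" using assms(2) by linarith
    then show "take m v ! j = take m w ! j" using j idx assms(3,7) h(1) by (simp add: v_def)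
  qed
  then have "red (take m \<sigma>) = red (take m p)"
    using red_take[of m v] red_take[of m w] h(2) assms(5) unfolding v_def by metis
  then show False using assms(4) by simp
qed

lemma Sset_iff: "\<pi> \<in> Sset n B p w \<longleftrightarrow> \<pi> \<in> perms n \<and> avoids B \<pi> \<and> (\<forall>j<length p. \<pi> ! j = w ! j)"
proof -
  have "(\<forall>i. 1 \<le> i \<and> i \<le> length p \<longrightarrow> \<pi> ! (i - 1) = w ! (i - 1)) \<longleftrightarrow> (\<forall>j<length p. \<pi> ! j = w ! j)"
  proof
    assume H: "\<forall>i. 1 \<le> i \<and> i \<le> length p \<longrightarrow> \<pi> ! (i - 1) = w ! (i - 1)"
    show "\<forall>j<length p. \<pi> ! j = w ! j"
    proof (intro allI impI)
      fix j assume "j < length p" then show "\<pi> ! j = w ! j" using H[rule_format, of "Suc j"] by simp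
    qed
  qed auto
  then show ?thesis unfolding Sset_def by simp
qed



theorem mainTheorem5:
  fixes \<sigma> p :: "nat list" and t k m :: nat
  assumes "\<sigma> \<in> perms t" and "p \<in> perms k" and "m = min (t - 1) k"
    and "red (take m p) \<noteq> red (take m \<sigma>)"
  shows "rev_deletable {1} p {(\<sigma>, {1..t - 2})}"
proof -
  let ?B = "{(\<sigma>, {1..t - 2})}"
  have ls: "length \<sigma> = t" using assms(1) unfolding perms_def by simp
  have lp: "length p = k" using assms(2) unfolding perms_def by simp
  have m0: "m \<noteq> 0" using assms(4) by (metis take_0)
  then have k1: "1 \<le> k" and t1: "0 < t" using assms(3) by auto
  have X: "\<forall>x\<in>snd (\<sigma>, {1..t - 2}). 0 < x \<and> x < length (fst (\<sigma>, {1..t - 2}))" using ls by auto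
  have L: "0 < length (fst (\<sigma>, {1..t - 2}))" using ls t1 by simp
  have mle: "m \<le> t - 1" "m \<le> k" using assms(3) by auto
  show ?thesis unfolding rev_deletable_def
  proof (intro conjI allI impI)
    show "{1} \<subseteq> {1..length p}" using lp k1 by simp
    fix n w
    assume "length w = length p \<and> distinct w \<and> set w \<subseteq> {1..n} \<and> red w = p \<and> Sset n ?B p w \<noteq> {}"
    then have lw: "length w = k" and dw: "distinct w" and sw: "set w \<subseteq> {1..n}" and rw: "red w = p"
      using lp by auto
    have "card (set w) \<le> card {1..n}" using sw by (intro card_mono) auto
    then have "k \<le> n" using distinct_card[OF dw] lw by simp
    define a where "a = w ! 0"
    have "w ! 0 \<in> set w" using lw k1 by simp
    then have a: "a \<in> {1..n}" using sw unfolding a_def by blast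
    have n1: "1 \<le> n" using \<open>k \<le> n\<close> k1 by simp
    have wne: "w ! Suc j \<noteq> a" if "j < k - 1" for j
      using dw that lw unfolding a_def by (simp add: nth_eq_iff_index_eq)
    have wpos: "w ! Suc j \<in> {1..n}" if "j < k - 1" for j proof -
      have "w ! Suc j \<in> set w" using that lw by simp
      then show ?thesis using sw by blast
    qed
    have lrp: "length (dperm {1} p) = k - 1" unfolding dperm_def red_def delpos1 using lp by simp
    have dw1: "dword {1} w ! j = dec a (w ! Suc j)" if "j < k - 1" for j
      using dword1(2)[OF lw k1 that] wne[OF that] unfolding a_def dec_def by auto
    have ind: "inc a (dec a x) = x" if "x \<noteq> a" "1 \<le> x" for x
      using that unfolding inc_def dec_def by auto
    define f' where "f' = (\<lambda>\<rho>. a # map (inc a) \<rho>)"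
    let ?S = "Sset n ?B p w"
    let ?TT = "Sset (n - card {1::nat}) ?B (dperm {1} p) (dword {1} w)"
    have decomp: "\<exists>\<rho>. \<pi> = a # \<rho> \<and> distinct \<rho> \<and> set \<rho> = {1..n} - {a} \<and> length \<rho> = n - 1"
      if "\<pi> \<in> ?S" for \<pi>
    proof -
      have P: "\<pi> \<in> perms n" "\<forall>j<k. \<pi> ! j = w ! j" using that lp unfolding Sset_iff by auto
      have "\<pi> \<noteq> []" using P(1) n1 unfolding perms_def by auto
      moreover have "\<pi> ! 0 = a" using P(2) k1 unfolding a_def by simp
      ultimately obtain \<rho> where e: "\<pi> = a # \<rho>" by (cases \<pi>) auto
      have "distinct (a # \<rho>)" "set (a # \<rho>) = {1..n}" "length (a # \<rho>) = n"
        using P(1) unfolding e perms_def by auto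
      then show ?thesis using e by auto
    qed
    show "bij_betw (dperm {1}) ?S ?TT"
    proof (rule bij_betw_byWitness[where f' = f'])
      show "\<forall>\<pi>\<in>?S. f' (dperm {1} \<pi>) = \<pi>"
      proof
        fix \<pi> assume \<pi>: "\<pi> \<in> ?S"
        obtain \<rho> where D: "\<pi> = a # \<rho>" "distinct \<rho>" "set \<rho> = {1..n} - {a}" "length \<rho> = n - 1"
          using decomp[OF \<pi>] by blast
        have "dperm {1} \<pi> = map (dec a) \<rho>" unfolding dperm_def delpos1 D(1) using red_remove[OF D(3) a] by simp
        moreover have "map (inc a) (map (dec a) \<rho>) = \<rho>"
          unfolding map_map o_def by (rule map_idI) (use D(3) ind in auto)
        ultimately show "f' (dperm {1} \<pi>) = \<pi>" unfolding f'_def using D(1) by simp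
      qed
      show "\<forall>\<rho>\<in>?TT. dperm {1} (f' \<rho>) = \<rho>"
      proof
        fix \<rho> assume "\<rho> \<in> ?TT"
        then have "\<rho> \<in> perms (n - 1)" unfolding Sset_iff by simp
        then show "dperm {1} (f' \<rho>) = \<rho>" unfolding f'_def dperm_def delpos1
          using red_map_mono[OF inc_mono[of "set \<rho>" a] order_refl] red_perm by simp
      qed
      show "dperm {1} ` ?S \<subseteq> ?TT"
      proof
        fix \<rho>' assume "\<rho>' \<in> dperm {1} ` ?S"
        then obtain \<pi> where \<pi>: "\<pi> \<in> ?S" and r': "\<rho>' = dperm {1} \<pi>" by blast
        obtain \<rho> where D: "\<pi> = a # \<rho>" "distinct \<rho>" "set \<rho> = {1..n} - {a}" "length \<rho> = n - 1"
          using decomp[OF \<pi>] by blast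
        have P: "avoids ?B \<pi>" "\<forall>j<k. \<pi> ! j = w ! j" using \<pi> lp unfolding Sset_iff by auto
        have e1: "\<rho>' = red \<rho>" unfolding r' dperm_def delpos1 D(1) by simp
        have e2: "\<rho>' = map (dec a) \<rho>" using e1 red_remove[OF D(3) a] by simp
        have "\<rho>' \<in> perms (n - 1)" using e2 dec_perm[OF D(2) D(3) D(4) a] by simp
        moreover have "avoids ?B \<rho>'"
          unfolding avoids_def
        proof (intro ballI notI)
          fix q assume q: "q \<in> ?B" and c: "contains \<rho>' q"
          then have "contains \<rho> q" using e1 contains_red by simp
          then have "contains \<pi> q" using contains_Cons[OF X] D(1) q by simp
          then show False using P(1) q unfolding avoids_def by blast
        qed
        moreover have "\<forall>j<length (dperm {1} p). \<rho>' ! j = dword {1} w ! j"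
        proof (intro allI impI)
          fix j assume "j < length (dperm {1} p)"
          then have j: "j < k - 1" using lrp by simp
          have "Suc j < k" using j by simp
          then have "\<pi> ! Suc j = w ! Suc j" using P(2) by blast
          then have "\<rho> ! j = w ! Suc j" using D(1) by simp
          moreover have "j < length \<rho>" using D(4) j \<open>k \<le> n\<close> by simp
          ultimately show "\<rho>' ! j = dword {1} w ! j" using e2 dw1[OF j] by simp
        qed
        ultimately show "\<rho>' \<in> ?TT" unfolding Sset_iff by simp
      qed
      show "f' ` ?TT \<subseteq> ?S"
      proof
        fix \<pi> assume "\<pi> \<in> f' ` ?TT"
        then obtain \<rho> where \<rho>: "\<rho> \<in> ?TT" and e: "\<pi> = a # map (inc a) \<rho>" unfolding f'_def by blast
        have R: "\<rho> \<in> perms (n - 1)" "avoids ?B \<rho>" "\<forall>j<k - 1. \<rho> ! j = dword {1} w ! j"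
          using \<rho> lrp unfolding Sset_iff by auto
        have lr: "length \<rho> = n - 1" using R(1) unfolding perms_def by simp
        have Pp: "\<pi> \<in> perms n" using inc_perm[OF R(1) a] e by simp
        have pre: "\<forall>j<k. \<pi> ! j = w ! j"
        proof (intro allI impI)
          fix j assume j: "j < k"
          show "\<pi> ! j = w ! j"
          proof (cases j)
            case 0 then show ?thesis using e a_def by simp
          next
            case (Suc j')
            then have j': "j' < k - 1" using j by simp
            then have "j' < length \<rho>" using lr \<open>k \<le> n\<close> by simp
            then have "\<pi> ! j = inc a (\<rho> ! j')" using e Suc by simp
            also have "\<dots> = inc a (dec a (w ! Suc j'))" using R(3) dw1 j' by simp
            also have "\<dots> = w ! Suc j'" using ind wne[OF j'] wpos[OF j'] by simp
            finally show ?thesis using Suc by simp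
          qed
        qed
        have "avoids ?B \<pi>"
          unfolding avoids_def
        proof (intro ballI notI)
          fix q assume q: "q \<in> ?B" and c: "contains \<pi> q"
          then have qq: "q = (\<sigma>, {1..t - 2})" by simp
          obtain "is" where o: "occ \<pi> q is" using c contains_occ by blast
          have "is ! 0 \<noteq> 0"
            using first_pos[OF ls mle(1) mle(2) assms(4) rw lw pre] o qq by simp
          moreover have "occ (a # map (inc a) \<rho>) (\<sigma>, {1..t - 2}) is" using o qq e by simp
          ultimately have "contains (map (inc a) \<rho>) (\<sigma>, {1..t - 2})" using contains_unCons[OF X L] by blast
          then have "contains \<rho> q" using qq by (simp add: contains_map[OF inc_mono])
          then show False using R(2) q unfolding avoids_def by blast
        qed
        then show "\<pi> \<in> ?S" unfolding Sset_iff using Pp pre lp by simp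
      qed
    qed
  qed
qed


end
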